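(* Let $\frac1{\sqrt2}<p<1$. There is $c=c(p)>0$ such that for any $a>0$ and any $n$, any local routing algorithm between the two roots of $TT_n$ (in $TT_{n,p}$) makes at least $a p^{-n}$ queries with probability at least $1-ca$.
   Context: The double binary tree $TT_n$ is obtained by taking two complete binary trees of uniform depth $n$ and identifying their corresponding leaves; its roots are the roots of the two trees. $TT_{n,p}$ is the random subgraph in which each edge is open independently with probability $p$. A routing algorithm between vertices $u,v$ may probe whether edges are open and outputs an open path from $u$ to $v$ if one exists; it is local if the first edge it probes is adjacent to $u$ and subsequently it probes only edges having an endpoint to which it has already established an open path from $u$. The number of queries is considered conditioned on the event that the two roots are connected by an open path. *)

theory Defs
  imports "HOL-Probability.Probability"
begin

text \<open>A vertex is a pair (t, s): t selects one of the two binary trees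
  (True = first/top tree, False = second/bottom tree) and s is the binary
  string describing the path from the root. Leaves (length s = n) are shared;
  their canonical representative uses t = False.\<close>

type_synonym vtx = "bool \<times> bool list"

definition node :: "nat \<Rightarrow> bool \<Rightarrow> bool list \<Rightarrow> vtx" where
  "node n t s = (if length s = n then (False, s) else (t, s))"

text \<open>An edge (t, w) with 1 \<le> length w \<le> n is the edge of tree t between the
  vertex w and its parent (butlast w).\<close>

type_synonym edge = "bool \<times> bool list"

definition tt_edges :: "nat \<Rightarrow> edge set" where
  "tt_edges n = {(t, w). 1 \<le> length w \<and> length w \<le> n}"

definition endpoints :: "nat \<Rightarrow> edge \<Rightarrow> vtx set" where
  "endpoints n e = {node n (fst e) (butlast (snd e)), node n (fst e) (snd e)}"

definition root :: "nat \<Rightarrow> bool \<Rightarrow> vtx" where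
  "root n t = node n t []"

definition adj_in :: "nat \<Rightarrow> edge set \<Rightarrow> vtx \<Rightarrow> vtx \<Rightarrow> bool" where
  "adj_in n F x y \<longleftrightarrow> (\<exists>e\<in>F \<inter> tt_edges n. x \<noteq> y \<and> endpoints n e = {x, y})"

definition conn_in :: "nat \<Rightarrow> edge set \<Rightarrow> vtx \<Rightarrow> vtx \<Rightarrow> bool" where
  "conn_in n F x y \<longleftrightarrow> (adj_in n F)\<^sup>*\<^sup>* x y"

definition open_edges :: "(edge \<Rightarrow> bool) \<Rightarrow> edge set" where
  "open_edges \<omega> = {e. \<omega> e}"

definition TT :: "nat \<Rightarrow> real \<Rightarrow> (edge \<Rightarrow> bool) pmf" where
  "TT n p = Pi_pmf (tt_edges n) False (\<lambda>_. bernoulli_pmf p)"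

text \<open>A (deterministic, adaptive) routing algorithm is a strategy mapping the
  history of probes (edge probed, whether it was open) to the next edge to
  probe, or None to stop.\<close>

type_synonym strategy = "(edge \<times> bool) list \<Rightarrow> edge option"

fun hist :: "strategy \<Rightarrow> (edge \<Rightarrow> bool) \<Rightarrow> nat \<Rightarrow> (edge \<times> bool) list" where
  "hist S \<omega> 0 = []"
| "hist S \<omega> (Suc k) = (case S (hist S \<omega> k) of None \<Rightarrow> hist S \<omega> k
                        | Some e \<Rightarrow> hist S \<omega> k @ [(e, \<omega> e)])"

definition revealed_open :: "(edge \<times> bool) list \<Rightarrow> edge set" where
  "revealed_open h = {e. (e, True) \<in> set h}"

definition local_routing :: "nat \<Rightarrow> vtx \<Rightarrow> vtx \<Rightarrow> strategy \<Rightarrow> bool" where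
  "local_routing n u v S \<longleftrightarrow>
     (\<forall>\<omega> k e. S (hist S \<omega> k) = Some e \<longrightarrow>
        e \<in> tt_edges n \<and> (\<exists>x\<in>endpoints n e. conn_in n (revealed_open (hist S \<omega> k)) u x)) \<and>
     (\<forall>\<omega>. conn_in n (open_edges \<omega>) u v \<longrightarrow>
        (\<exists>k. S (hist S \<omega> k) = None) \<and>
        (\<forall>k. S (hist S \<omega> k) = None \<longrightarrow> conn_in n (revealed_open (hist S \<omega> k)) u v))"

definition num_queries :: "strategy \<Rightarrow> (edge \<Rightarrow> bool) \<Rightarrow> nat" where
  "num_queries S \<omega> = (LEAST k. S (hist S \<omega> k) = None)"

end

theory Submission
  imports Defs
begin

lemma prob_pair_times:
  "measure_pmf.prob (pair_pmf M N) (E \<times> F) = measure_pmf.prob M E * measure_pmf.prob N F"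
proof -
  have "measure_pmf.prob (pair_pmf M N) (E \<times> F) = measure_pmf.prob (pair_pmf M N) ((E \<times> F) \<inter> set_pmf (pair_pmf M N))"
    by (rule measure_Int_set_pmf[symmetric])
  also have "(E \<times> F) \<inter> set_pmf (pair_pmf M N) = (E \<inter> set_pmf M) \<times> (F \<inter> set_pmf N)" by auto
  also have "measure_pmf.prob (pair_pmf M N) \<dots> = measure_pmf.prob M (E \<inter> set_pmf M) * measure_pmf.prob N (F \<inter> set_pmf N)"
    by (intro measure_pmf_prob_product) (auto intro: countable_subset)
  finally show ?thesis by (simp add: measure_Int_set_pmf)
qed

lemma Pi_indep:
  assumes fin: "finite I" and AI: "A \<subseteq> I"
  and E: "\<And>f g. (\<forall>x\<in>A. f x = g x) \<Longrightarrow> f \<in> E \<longleftrightarrow> g \<in> E"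
  and F: "\<And>f g. (\<forall>x\<in>I-A. f x = g x) \<Longrightarrow> f \<in> F \<longleftrightarrow> g \<in> F"
  shows "measure_pmf.prob (Pi_pmf I d P) (E \<inter> F) = measure_pmf.prob (Pi_pmf I d P) E * measure_pmf.prob (Pi_pmf I d P) F"
proof -
  define h where "h = (\<lambda>(f::'a\<Rightarrow>'b,g) x. if x \<in> A then f x else g x)"
  have fA: "finite A" using fin AI finite_subset by blast
  have eq: "Pi_pmf I d P = map_pmf h (pair_pmf (Pi_pmf A d P) (Pi_pmf (I - A) d P))"
  proof -
    have "I = A \<union> (I - A)" using AI by blast
    then have "Pi_pmf I d P = Pi_pmf (A \<union> (I - A)) d P" by simp
    also have "\<dots> = map_pmf h (pair_pmf (Pi_pmf A d P) (Pi_pmf (I - A) d P))"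
      unfolding h_def using fin fA by (intro Pi_pmf_union) auto
    finally show ?thesis .
  qed
  have hE: "h (f,g) \<in> E \<longleftrightarrow> f \<in> E" for f g by (rule E) (auto simp: h_def)
  have hF: "h (f,g) \<in> F \<longleftrightarrow> g \<in> F" for f g by (rule F) (auto simp: h_def)
  have 1: "h -` (E \<inter> F) = E \<times> F" using hE hF by auto
  have 2: "h -` E = E \<times> UNIV" using hE by auto
  have 3: "h -` F = UNIV \<times> F" using hF by auto
  show ?thesis unfolding eq measure_map_pmf 1 2 3 prob_pair_times by simp
qed

lemma prob_all_open:
  assumes fin: "finite I" and FI: "F \<subseteq> I" and p: "0 \<le> p" "p \<le> 1"
  shows "measure_pmf.prob (Pi_pmf I False (\<lambda>_. bernoulli_pmf p)) {\<omega>. \<forall>e\<in>F. \<omega> e} = p ^ card F"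
proof -
  have "{\<omega>. \<forall>e\<in>F. \<omega> e} = Pi I (\<lambda>e. if e \<in> F then {True} else UNIV)"
    using FI by (auto simp: Pi_def)
  then have "measure_pmf.prob (Pi_pmf I False (\<lambda>_. bernoulli_pmf p)) {\<omega>. \<forall>e\<in>F. \<omega> e}
     = (\<Prod>x\<in>I. measure_pmf.prob (bernoulli_pmf p) (if x \<in> F then {True} else UNIV))"
    using fin by (simp add: measure_Pi_pmf_Pi)
  also have "\<dots> = (\<Prod>x\<in>I. if x \<in> F then p else 1)"
    using p by (intro prod.cong) (auto simp: measure_pmf_single)
  also have "\<dots> = p ^ card (I \<inter> F)"
    using fin by (simp add: prod.If_cases)
  also have "I \<inter> F = F" using FI by blast
  finally show ?thesis .
qed

lemma hist_set:
  "(e, b) \<in> set (hist S \<omega> i) \<Longrightarrow> (\<exists>j<i. S (hist S \<omega> j) = Some e) \<and> b = \<omega> e"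
proof (induction i)
  case 0 then show ?case by simp
next
  case (Suc i)
  then show ?case by (auto split: option.splits) (metis less_SucI)+
qed

lemma hist_agree:
  "(\<forall>j<i. \<forall>e. S (hist S \<omega> j) = Some e \<longrightarrow> \<omega> e = \<omega>' e) \<Longrightarrow> hist S \<omega>' i = hist S \<omega> i"
proof (induction i)
  case 0 then show ?case by simp
next
  case (Suc i)
  then have IH: "hist S \<omega>' i = hist S \<omega> i" using less_SucI by blast
  show ?case using Suc.prems by (auto simp: IH split: option.splits)
qed

definition good :: "(edge \<Rightarrow> bool) \<Rightarrow> bool list \<Rightarrow> bool" where
  "good \<omega> w \<longleftrightarrow> (\<forall>k\<in>{1..length w}. \<omega> (False, take k w))"

definition DD :: "nat \<Rightarrow> (edge \<Rightarrow> bool) \<Rightarrow> edge set" where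
  "DD n \<omega> = {(False, w) | w. 1 \<le> length w \<and> length w \<le> n \<and> good \<omega> w}"

definition Qv :: "nat \<Rightarrow> (edge \<Rightarrow> bool) \<Rightarrow> vtx \<Rightarrow> bool" where
  "Qv n \<omega> z \<longleftrightarrow> (\<exists>s. z = (False, s) \<and> length s < n \<and> good \<omega> s)"

definition Anc :: "bool list \<Rightarrow> edge set" where
  "Anc l = (\<lambda>k. (False, take k l)) ` {1..length l}"

lemma good_take: "good \<omega> w \<Longrightarrow> good \<omega> (take m w)"
  by (auto simp: good_def min_def)

lemma good_butlast: "good \<omega> w \<Longrightarrow> good \<omega> (butlast w)"
  by (simp add: butlast_conv_take good_take)

lemma node_False[simp]: "node n False s = (False, s)"
  by (simp add: node_def)

lemma last_step:
  assumes H: "\<And>e. (e, True) \<in> set H \<Longrightarrow> \<omega> e \<and> e \<notin> DD n \<omega>"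
  and adj: "adj_in n (revealed_open H) y z" and q: "Qv n \<omega> z"
  shows False
proof -
  obtain e where e: "(e, True) \<in> set H" "e \<in> tt_edges n" "endpoints n e = {y, z}"
    using adj by (auto simp: adj_in_def revealed_open_def)
  obtain t w where tw: "e = (t, w)" by (cases e)
  obtain s where s: "z = (False, s)" "length s < n" "good \<omega> s" using q by (auto simp: Qv_def)
  have w: "1 \<le> length w" "length w \<le> n" using e(2) tw by (auto simp: tt_edges_def)
  have z: "z = node n t (butlast w) \<or> z = node n t w"
    using e(3) tw by (auto simp: endpoints_def doubleton_eq_iff)
  have op: "\<omega> e" "e \<notin> DD n \<omega>" using H[OF e(1)] by auto
  show False
  proof (cases t)
    case True
    then show False using z s w by (auto simp: node_def split: if_splits)
  next
    case False
    then have z': "s = butlast w \<or> s = w" using z s by auto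
    have "good \<omega> w"
    proof (cases "s = w")
      case True then show ?thesis using s by simp
    next
      case False
      then have sb: "s = butlast w" using z' by simp
      show ?thesis unfolding good_def
      proof
        fix k assume k: "k \<in> {1..length w}"
        show "\<omega> (False, take k w)"
        proof (cases "k = length w")
          case True then show ?thesis using op(1) tw \<open>\<not> t\<close> by simp
        next
          case False
          then have "take k w = take k s" using k sb by (auto simp: butlast_conv_take min_def)
          moreover have "k \<in> {1..length s}" using k False sb by auto
          ultimately show ?thesis using s(3) by (simp add: good_def)
        qed
      qed
    qed
    then have "e \<in> DD n \<omega>" using tw False w by (auto simp: DD_def)
    then show False using op(2) by simp
  qed
qed

lemma conn_Qv:
  assumes H: "\<And>e. (e, True) \<in> set H \<Longrightarrow> \<omega> e \<and> e \<notin> DD n \<omega>"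
  and c: "conn_in n (revealed_open H) y z" and q: "Qv n \<omega> z"
  shows "y = z"
  using c unfolding conn_in_def
proof (cases rule: rtranclp.cases)
  case (rtrancl_into_rtrancl b)
  then show ?thesis using last_step[OF H _ q] by blast
qed simp

lemma root_True: "1 \<le> n \<Longrightarrow> root n True = (True, [])"
  by (simp add: root_def node_def)

lemma root_False: "root n False = (False, [])"
  by (simp add: root_def)

lemma Anc_sub_DD: "length l = n \<Longrightarrow> good \<omega> l \<Longrightarrow> Anc l \<subseteq> DD n \<omega>"
  by (auto simp: Anc_def DD_def intro!: good_take)

lemma succ:
  assumes n: "1 \<le> n" and loc: "local_routing n (root n True) (root n False) S"
  and c: "conn_in n (open_edges \<omega>) (root n True) (root n False)"
  shows "\<exists>i < num_queries S \<omega>. \<exists>l. length l = n \<and> S (hist S \<omega> i) = Some (False, l) \<and>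
     (\<forall>j<i. \<forall>e. S (hist S \<omega> j) = Some e \<longrightarrow> e \<notin> Anc l) \<and> good \<omega> l"
proof -
  let ?u = "root n True" and ?r = "root n False"
  have L1: "\<And>\<omega> k e. S (hist S \<omega> k) = Some e \<Longrightarrow>
        e \<in> tt_edges n \<and> (\<exists>x\<in>endpoints n e. conn_in n (revealed_open (hist S \<omega> k)) ?u x)"
    using loc unfolding local_routing_def by blast
  have L2: "(\<exists>k. S (hist S \<omega> k) = None) \<and>
        (\<forall>k. S (hist S \<omega> k) = None \<longrightarrow> conn_in n (revealed_open (hist S \<omega> k)) ?u ?r)"
    using loc c unfolding local_routing_def by blast
  define Q where "Q = num_queries S \<omega>"
  have SQ: "S (hist S \<omega> Q) = None"
    unfolding Q_def num_queries_def using L2 by (metis (mono_tags, lifting) LeastI_ex)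
  have cQ: "conn_in n (revealed_open (hist S \<omega> Q)) ?u ?r" using L2 SQ by blast
  have qr: "Qv n \<omega> ?r" using n by (simp add: Qv_def root_False good_def)
  have ur: "?u \<noteq> ?r" using n by (simp add: root_True root_False)
  have "\<exists>e. (e, True) \<in> set (hist S \<omega> Q) \<and> e \<in> DD n \<omega>"
  proof (rule ccontr)
    assume "\<not> ?thesis"
    then have "\<And>e. (e, True) \<in> set (hist S \<omega> Q) \<Longrightarrow> \<omega> e \<and> e \<notin> DD n \<omega>"
      using hist_set by blast
    from conn_Qv[OF this cQ qr] ur show False by simp
  qed
  then obtain e0 j0 where j0: "j0 < Q" "S (hist S \<omega> j0) = Some e0" "e0 \<in> DD n \<omega>"
    using hist_set by blast
  define P where "P = (\<lambda>i. \<exists>e. S (hist S \<omega> i) = Some e \<and> e \<in> DD n \<omega>)"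
  define i where "i = (LEAST i. P i)"
  have Pj0: "P j0" unfolding P_def using j0 by blast
  have Pi: "P i" unfolding i_def by (rule LeastI[of P j0, OF Pj0])
  have iQ: "i < Q" using Least_le[of P j0] j0 unfolding i_def P_def by auto
  have minP: "\<And>j e. j < i \<Longrightarrow> S (hist S \<omega> j) = Some e \<Longrightarrow> e \<notin> DD n \<omega>"
    using not_less_Least[of _ P] unfolding i_def P_def by blast
  obtain ei where ei: "S (hist S \<omega> i) = Some ei" "ei \<in> DD n \<omega>" using Pi P_def by blast
  then obtain w where w: "ei = (False, w)" "1 \<le> length w" "length w \<le> n" "good \<omega> w"
    by (auto simp: DD_def)
  obtain x where x: "x \<in> endpoints n ei" "conn_in n (revealed_open (hist S \<omega> i)) ?u x"
    using L1[OF ei(1)] by blast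
  have Hi: "\<And>e. (e, True) \<in> set (hist S \<omega> i) \<Longrightarrow> \<omega> e \<and> e \<notin> DD n \<omega>"
    using hist_set minP by blast
  have xx: "x = (False, butlast w) \<or> x = (False, w)" using x(1) w(1) by (simp add: endpoints_def)
  have lw: "length w = n"
  proof (rule ccontr)
    assume "length w \<noteq> n"
    then have "Qv n \<omega> x" using xx w by (auto simp: Qv_def good_butlast)
    from conn_Qv[OF Hi x(2) this] xx n show False by (auto simp: root_True)
  qed
  have "\<forall>j<i. \<forall>e. S (hist S \<omega> j) = Some e \<longrightarrow> e \<notin> Anc w"
    using minP Anc_sub_DD[OF lw w(4)] by blast
  then show ?thesis using iQ lw ei(1) w unfolding Q_def by blast
qed

lemma finite_tt_edges: "finite (tt_edges n)"
proof -
  have "tt_edges n \<subseteq> UNIV \<times> {w. length w \<le> n}" by (auto simp: tt_edges_def)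
  moreover have "finite {w::bool list. length w \<le> n}"
    using finite_lists_length_le[of "UNIV::bool set" n] by simp
  then have "finite ((UNIV::bool set) \<times> {w::bool list. length w \<le> n})"
    by (intro finite_cartesian_product) simp_all
  ultimately show ?thesis using finite_subset by blast
qed

lemma Anc_sub: "length l = n \<Longrightarrow> Anc l \<subseteq> tt_edges n"
  by (auto simp: Anc_def tt_edges_def)

lemma card_Anc: "card (Anc l) = length l"
proof -
  have "inj_on (\<lambda>k. (False, take k l)) {1..length l}"
    by (rule inj_onI) (metis atLeastAtMost_iff length_take min.absorb2 prod.inject)
  then show ?thesis unfolding Anc_def by (simp add: card_image)
qed

lemma good_Anc: "good \<omega> l \<longleftrightarrow> (\<forall>e\<in>Anc l. \<omega> e)"
  by (auto simp: good_def Anc_def)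

definition GG :: "strategy \<Rightarrow> nat \<Rightarrow> bool list \<Rightarrow> (edge \<Rightarrow> bool) set" where
  "GG S i l = {\<omega>. S (hist S \<omega> i) = Some (False, l) \<and>
       (\<forall>j<i. \<forall>e. S (hist S \<omega> j) = Some e \<longrightarrow> e \<notin> Anc l)}"

lemma GG_inv:
  assumes L1: "\<forall>\<omega> k e. S (hist S \<omega> k) = Some e \<longrightarrow> e \<in> tt_edges n"
  and g: "\<omega> \<in> GG S i l" and ag: "\<forall>x\<in>tt_edges n - Anc l. \<omega> x = \<omega>' x"
  shows "\<omega>' \<in> GG S i l"
proof -
  have hj: "hist S \<omega>' j = hist S \<omega> j" if "j \<le> i" for j
  proof (rule hist_agree, intro allI impI)
    fix j' e assume j': "j' < j" and e: "S (hist S \<omega> j') = Some e"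
    have "e \<in> tt_edges n" using L1 e by blast
    have "j' < i" using j' that by simp
    then have "e \<notin> Anc l" using g e unfolding GG_def by blast
    moreover note \<open>e \<in> tt_edges n\<close>
    ultimately show "\<omega> e = \<omega>' e" using ag by blast
  qed
  show ?thesis using g hj by (auto simp: GG_def)
qed

lemma succ_bound:
  assumes L1: "\<And>\<omega> k e. S (hist S \<omega> k) = Some e \<Longrightarrow> e \<in> tt_edges n"
  and p: "0 \<le> p" "p \<le> 1"
  shows "measure_pmf.prob (TT n p) {\<omega>. \<exists>l. length l = n \<and> \<omega> \<in> GG S i l \<and> good \<omega> l} \<le> p ^ n"
proof -
  let ?M = "TT n p"
  define L where "L = {l::bool list. length l = n}"
  have fL: "finite L" unfolding L_def
    using finite_lists_length_le[of "UNIV::bool set" n] by (rule finite_subset[rotated]) auto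
  have eq: "{\<omega>. \<exists>l. length l = n \<and> \<omega> \<in> GG S i l \<and> good \<omega> l} = (\<Union>l\<in>L. {\<omega>. good \<omega> l} \<inter> GG S i l)"
    by (auto simp: L_def)
  have L1': "\<forall>\<omega> k e. S (hist S \<omega> k) = Some e \<longrightarrow> e \<in> tt_edges n" using L1 by blast
  have ind: "measure_pmf.prob ?M ({\<omega>. good \<omega> l} \<inter> GG S i l) = p ^ n * measure_pmf.prob ?M (GG S i l)"
    if l: "l \<in> L" for l
  proof -
    have ln: "length l = n" using l by (simp add: L_def)
    have "measure_pmf.prob ?M ({\<omega>. good \<omega> l} \<inter> GG S i l) =
          measure_pmf.prob ?M {\<omega>. good \<omega> l} * measure_pmf.prob ?M (GG S i l)"
      unfolding TT_def
    proof (rule Pi_indep[OF finite_tt_edges Anc_sub[OF ln]])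
      fix f g :: "edge \<Rightarrow> bool" assume "\<forall>x\<in>Anc l. f x = g x"
      then show "f \<in> {\<omega>. good \<omega> l} \<longleftrightarrow> g \<in> {\<omega>. good \<omega> l}" by (auto simp: good_Anc)
    next
      fix f g :: "edge \<Rightarrow> bool" assume a: "\<forall>x\<in>tt_edges n - Anc l. f x = g x"
      then have a': "\<forall>x\<in>tt_edges n - Anc l. g x = f x" by auto
      show "f \<in> GG S i l \<longleftrightarrow> g \<in> GG S i l"
        using GG_inv[OF L1' _ a] GG_inv[OF L1' _ a'] by blast
    qed
    also have "measure_pmf.prob ?M {\<omega>. good \<omega> l} = p ^ n"
      unfolding good_Anc TT_def using prob_all_open[OF finite_tt_edges Anc_sub[OF ln] p] card_Anc ln
      by simp
    finally show ?thesis .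
  qed
  have "measure_pmf.prob ?M (\<Union>l\<in>L. {\<omega>. good \<omega> l} \<inter> GG S i l) \<le>
        (\<Sum>l\<in>L. measure_pmf.prob ?M ({\<omega>. good \<omega> l} \<inter> GG S i l))"
    using fL by (intro measure_pmf.finite_measure_subadditive_finite) auto
  also have "\<dots> = p ^ n * (\<Sum>l\<in>L. measure_pmf.prob ?M (GG S i l))"
    using ind by (simp add: sum_distrib_left)
  also have "(\<Sum>l\<in>L. measure_pmf.prob ?M (GG S i l)) = measure_pmf.prob ?M (\<Union>l\<in>L. GG S i l)"
    using fL by (intro measure_pmf.finite_measure_finite_Union[symmetric])
      (auto simp: disjoint_family_on_def GG_def)
  also have "p ^ n * \<dots> \<le> p ^ n" using p by (intro mult_left_le) simp_all
  finally show ?thesis unfolding eq .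
qed

lemma bad_bound:
  assumes n: "1 \<le> n" and loc: "local_routing n (root n True) (root n False) S"
  and p: "0 \<le> p" "p \<le> 1" and x: "0 \<le> x"
  shows "measure_pmf.prob (TT n p) {\<omega>. conn_in n (open_edges \<omega>) (root n True) (root n False)
            \<and> real (num_queries S \<omega>) < x} \<le> x * p ^ n"
proof -
  define M where "M = nat \<lfloor>x\<rfloor>"
  define Su where "Su = (\<lambda>i. {\<omega>. \<exists>l. length l = n \<and> \<omega> \<in> GG S i l \<and> good \<omega> l})"
  have L1: "\<And>\<omega> k e. S (hist S \<omega> k) = Some e \<Longrightarrow> e \<in> tt_edges n"
    using loc unfolding local_routing_def by blast
  have sub: "{\<omega>. conn_in n (open_edges \<omega>) (root n True) (root n False)
            \<and> real (num_queries S \<omega>) < x} \<subseteq> (\<Union>i\<in>{..<M}. Su i)"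
  proof
    fix \<omega> assume "\<omega> \<in> {\<omega>. conn_in n (open_edges \<omega>) (root n True) (root n False)
            \<and> real (num_queries S \<omega>) < x}"
    then have c: "conn_in n (open_edges \<omega>) (root n True) (root n False)"
      and q: "real (num_queries S \<omega>) < x" by auto
    obtain i l where i: "i < num_queries S \<omega>" "length l = n" "S (hist S \<omega> i) = Some (False, l)"
      "\<forall>j<i. \<forall>e. S (hist S \<omega> j) = Some e \<longrightarrow> e \<notin> Anc l" "good \<omega> l"
      using succ[OF n loc c] by blast
    have "int (num_queries S \<omega>) \<le> \<lfloor>x\<rfloor>" using q by (simp add: le_floor_iff)
    then have "num_queries S \<omega> \<le> M" unfolding M_def by linarith
    then have "i < M" using i(1) by simp
    moreover have "\<omega> \<in> Su i" using i unfolding Su_def GG_def by blast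
    ultimately show "\<omega> \<in> (\<Union>i\<in>{..<M}. Su i)" by blast
  qed
  have "measure_pmf.prob (TT n p) {\<omega>. conn_in n (open_edges \<omega>) (root n True) (root n False)
            \<and> real (num_queries S \<omega>) < x} \<le> measure_pmf.prob (TT n p) (\<Union>i\<in>{..<M}. Su i)"
    using sub by (intro measure_pmf.finite_measure_mono) auto
  also have "\<dots> \<le> (\<Sum>i\<in>{..<M}. measure_pmf.prob (TT n p) (Su i))"
    by (intro measure_pmf.finite_measure_subadditive_finite) auto
  also have "\<dots> \<le> (\<Sum>i\<in>{..<M}. p ^ n)"
    unfolding Su_def by (intro sum_mono succ_bound[OF L1 p])
  also have "\<dots> = real M * p ^ n" by simp
  also have "\<dots> \<le> x * p ^ n"
    using of_nat_floor[OF x] p unfolding M_def by (intro mult_right_mono) simp_all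
  finally show ?thesis .
qed

definition sh :: "bool \<Rightarrow> (edge \<Rightarrow> bool) \<Rightarrow> edge \<Rightarrow> bool" where
  "sh b \<omega> = (\<lambda>(t, w). \<omega> (t, b # w))"

definition phi :: "bool \<Rightarrow> vtx \<Rightarrow> vtx" where
  "phi b = (\<lambda>(t, s). (t, b # s))"

lemma node_lift: "node (Suc n) t (b # s) = phi b (node n t s)"
  by (simp add: node_def phi_def)

lemma phi_inj: "phi b x = phi b y \<longleftrightarrow> x = y"
  by (cases x; cases y) (simp add: phi_def)

lemma adj_lift:
  assumes "adj_in n (open_edges (sh b \<omega>)) x y"
  shows "adj_in (Suc n) (open_edges \<omega>) (phi b x) (phi b y)"
proof -
  obtain t w where e: "(t, w) \<in> open_edges (sh b \<omega>)" "(t, w) \<in> tt_edges n" "x \<noteq> y"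
    "endpoints n (t, w) = {x, y}"
    using assms unfolding adj_in_def by auto
  have w: "w \<noteq> []" using e(2) by (auto simp: tt_edges_def)
  have "(t, b # w) \<in> open_edges \<omega> \<inter> tt_edges (Suc n)"
    using e(1,2) by (auto simp: open_edges_def sh_def tt_edges_def)
  moreover have "endpoints (Suc n) (t, b # w) = phi b ` endpoints n (t, w)"
    using w by (simp add: endpoints_def node_lift[symmetric])
  then have "endpoints (Suc n) (t, b # w) = {phi b x, phi b y}" using e(4) by simp
  moreover have "phi b x \<noteq> phi b y" using e(3) by (simp add: phi_inj)
  ultimately show ?thesis unfolding adj_in_def by blast
qed

lemma conn_lift:
  assumes "conn_in n (open_edges (sh b \<omega>)) x y"
  shows "conn_in (Suc n) (open_edges \<omega>) (phi b x) (phi b y)"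
  using assms unfolding conn_in_def
proof (induction rule: rtranclp_induct)
  case base then show ?case by simp
next
  case (step y z)
  then show ?case using adj_lift[OF step(2)] by (meson rtranclp.rtrancl_into_rtrancl)
qed

lemma conn_root_lift:
  assumes c: "conn_in n (open_edges (sh b \<omega>)) (root n True) (root n False)"
  and o1: "\<omega> (True, [b])" and o2: "\<omega> (False, [b])"
  shows "conn_in (Suc n) (open_edges \<omega>) (root (Suc n) True) (root (Suc n) False)"
proof -
  have r1: "phi b (root n True) = node (Suc n) True [b]"
    by (simp add: root_def node_lift)
  have r2: "phi b (root n False) = node (Suc n) False [b]"
    by (simp add: root_def phi_def)
  have a1: "adj_in (Suc n) (open_edges \<omega>) (root (Suc n) True) (phi b (root n True))"
    unfolding adj_in_def r1 using o1
    by (intro bexI[of _ "(True, [b])"]) (auto simp: endpoints_def root_def open_edges_def tt_edges_def node_def)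
  have a2: "adj_in (Suc n) (open_edges \<omega>) (phi b (root n False)) (root (Suc n) False)"
    unfolding adj_in_def r2 using o2
    by (intro bexI[of _ "(False, [b])"]) (auto simp: endpoints_def root_def open_edges_def tt_edges_def node_def)
  show ?thesis using conn_lift[OF c] a1 a2 unfolding conn_in_def
    by (meson converse_rtranclp_into_rtranclp rtranclp.rtrancl_into_rtrancl)
qed

lemma conn_restrict: "conn_in n F x y = conn_in n (F \<inter> tt_edges n) x y"
proof -
  have "adj_in n F = adj_in n (F \<inter> tt_edges n)"
    by (intro ext) (simp add: adj_in_def Int_assoc)
  then show ?thesis by (simp add: conn_in_def)
qed

lemma TT_shift:
  "TT n p = map_pmf (\<lambda>\<omega> e. if e \<in> tt_edges n then sh b \<omega> e else False) (TT (Suc n) p)"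
proof -
  define h where "h = (\<lambda>(t::bool, w::bool list). (t, b # w))"
  define B where "B = h ` tt_edges n"
  have injh: "inj h" by (auto simp: h_def inj_def)
  have hB: "h x \<in> B \<longleftrightarrow> x \<in> tt_edges n" for x
    unfolding B_def using injh by (auto dest: injD)
  have hB': "(t, b # w) \<in> B \<longleftrightarrow> (t, w) \<in> tt_edges n" for t w
    using hB[of "(t, w)"] by (simp add: h_def)
  have BT: "B \<subseteq> tt_edges (Suc n)" by (auto simp: B_def h_def tt_edges_def)
  have "TT n p = map_pmf (\<lambda>g. g \<circ> h) (Pi_pmf B False (\<lambda>_. bernoulli_pmf p))"
    unfolding TT_def
  proof (rule Pi_pmf_bij_betw[OF finite_tt_edges])
    show "bij_betw h (tt_edges n) B" unfolding B_def
      by (rule inj_on_imp_bij_betw[OF inj_on_subset[OF injh]]) simp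
    show "\<And>x. x \<notin> tt_edges n \<Longrightarrow> h x \<notin> B" using hB by blast
  qed
  also have "Pi_pmf B False (\<lambda>_. bernoulli_pmf p) =
      map_pmf (\<lambda>f x. if x \<in> B then f x else False) (TT (Suc n) p)"
    unfolding TT_def by (rule Pi_pmf_subset[OF finite_tt_edges BT])
  also have "map_pmf (\<lambda>g. g \<circ> h) (map_pmf (\<lambda>f x. if x \<in> B then f x else False) (TT (Suc n) p))
     = map_pmf (\<lambda>\<omega> e. if e \<in> tt_edges n then sh b \<omega> e else False) (TT (Suc n) p)"
    unfolding map_pmf_comp
    by (intro map_pmf_cong refl ext) (auto simp: hB' sh_def h_def split: prod.splits)
  finally show ?thesis .
qed

definition cp :: "nat \<Rightarrow> real \<Rightarrow> real" where
  "cp n p = measure_pmf.prob (TT n p) {\<omega>. conn_in n (open_edges \<omega>) (root n True) (root n False)}"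

lemma prob_shift:
  "measure_pmf.prob (TT (Suc n) p) {\<omega>. conn_in n (open_edges (sh b \<omega>)) (root n True) (root n False)} = cp n p"
proof -
  have "cp n p = measure_pmf.prob (TT (Suc n) p)
     ((\<lambda>\<omega> e. if e \<in> tt_edges n then sh b \<omega> e else False) -` {\<omega>. conn_in n (open_edges \<omega>) (root n True) (root n False)})"
    unfolding cp_def by (subst TT_shift[of n p b]) simp
  also have "((\<lambda>\<omega> e. if e \<in> tt_edges n then sh b \<omega> e else False) -` {\<omega>. conn_in n (open_edges \<omega>) (root n True) (root n False)})
     = {\<omega>. conn_in n (open_edges (sh b \<omega>)) (root n True) (root n False)}"
  proof -
    have "open_edges (\<lambda>e. if e \<in> tt_edges n then sh b \<omega> e else False) \<inter> tt_edges n = open_edges (sh b \<omega>) \<inter> tt_edges n" for \<omega>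
      by (auto simp: open_edges_def)
    then show ?thesis by (auto simp: conn_restrict[of n "open_edges _"])
  qed
  finally show ?thesis by simp
qed

definition CC :: "nat \<Rightarrow> bool \<Rightarrow> (edge \<Rightarrow> bool) set" where
  "CC n b = {\<omega>. \<omega> (True, [b]) \<and> \<omega> (False, [b])} \<inter>
            {\<omega>. conn_in n (open_edges (sh b \<omega>)) (root n True) (root n False)}"

lemma conn_sh_inv:
  assumes "\<forall>t w. (t, w) \<in> tt_edges n \<longrightarrow> f (t, b # w) = g (t, b # w)"
  shows "conn_in n (open_edges (sh b f)) x y = conn_in n (open_edges (sh b g)) x y"
proof -
  have "open_edges (sh b f) \<inter> tt_edges n = open_edges (sh b g) \<inter> tt_edges n"
    using assms by (auto simp: open_edges_def sh_def)
  then show ?thesis by (metis conn_restrict)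
qed

lemma CC_inv:
  assumes "\<forall>t w. length w \<le> n \<longrightarrow> f (t, b # w) = g (t, b # w)"
  shows "f \<in> CC n b \<longleftrightarrow> g \<in> CC n b"
proof -
  have "\<forall>t w. (t, w) \<in> tt_edges n \<longrightarrow> f (t, b # w) = g (t, b # w)"
    using assms by (auto simp: tt_edges_def)
  from conn_sh_inv[OF this] show ?thesis using assms unfolding CC_def
    by (metis (no_types, lifting) IntE IntI le0 list.size(3) mem_Collect_eq)
qed

lemma prob_CC:
  assumes p: "0 \<le> p" "p \<le> 1"
  shows "measure_pmf.prob (TT (Suc n) p) (CC n b) = p ^ 2 * cp n p"
proof -
  let ?A = "{(True, [b]), (False, [b])} :: edge set"
  have AI: "?A \<subseteq> tt_edges (Suc n)" by (auto simp: tt_edges_def)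
  have "measure_pmf.prob (TT (Suc n) p) (CC n b) =
     measure_pmf.prob (TT (Suc n) p) {\<omega>. \<forall>e\<in>?A. \<omega> e} *
     measure_pmf.prob (TT (Suc n) p) {\<omega>. conn_in n (open_edges (sh b \<omega>)) (root n True) (root n False)}"
    unfolding CC_def TT_def
  proof (subst Pi_indep[OF finite_tt_edges AI, symmetric])
    fix f g :: "edge \<Rightarrow> bool"
    assume a: "\<forall>x\<in>tt_edges (Suc n) - ?A. f x = g x"
    have "\<forall>t w. (t, w) \<in> tt_edges n \<longrightarrow> f (t, b # w) = g (t, b # w)"
      using a by (auto simp: tt_edges_def)
    from conn_sh_inv[OF this]
    show "f \<in> {\<omega>. conn_in n (open_edges (sh b \<omega>)) (root n True) (root n False)} \<longleftrightarrow>
          g \<in> {\<omega>. conn_in n (open_edges (sh b \<omega>)) (root n True) (root n False)}" by simp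
  qed (auto intro!: arg_cong[where f="measure_pmf.prob _"])
  also have "measure_pmf.prob (TT (Suc n) p) {\<omega>. \<forall>e\<in>?A. \<omega> e} = p ^ 2"
    unfolding TT_def using prob_all_open[OF finite_tt_edges AI p] by (simp add: power2_eq_square)
  finally show ?thesis by (simp add: prob_shift)
qed

lemma cp_rec:
  assumes p: "0 \<le> p" "p \<le> 1"
  shows "2 * (p ^ 2 * cp n p) - (p ^ 2 * cp n p) ^ 2 \<le> cp (Suc n) p"
proof -
  let ?M = "TT (Suc n) p"
  let ?A = "{e \<in> tt_edges (Suc n). \<exists>w. snd e = False # w}"
  have ind: "measure_pmf.prob ?M (CC n False \<inter> CC n True) =
      measure_pmf.prob ?M (CC n False) * measure_pmf.prob ?M (CC n True)"
    unfolding TT_def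
  proof (rule Pi_indep[OF finite_tt_edges])
    show "?A \<subseteq> tt_edges (Suc n)" by blast
  next
    fix f g :: "edge \<Rightarrow> bool" assume a: "\<forall>x\<in>?A. f x = g x"
    show "f \<in> CC n False \<longleftrightarrow> g \<in> CC n False"
      by (rule CC_inv) (use a in \<open>auto simp: tt_edges_def\<close>)
  next
    fix f g :: "edge \<Rightarrow> bool" assume a: "\<forall>x\<in>tt_edges (Suc n) - ?A. f x = g x"
    show "f \<in> CC n True \<longleftrightarrow> g \<in> CC n True"
      by (rule CC_inv) (use a in \<open>auto simp: tt_edges_def\<close>)
  qed
  have sub: "CC n False \<union> CC n True \<subseteq>
     {\<omega>. conn_in (Suc n) (open_edges \<omega>) (root (Suc n) True) (root (Suc n) False)}"
    using conn_root_lift by (auto simp: CC_def)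
  have "measure_pmf.prob ?M (CC n False \<union> CC n True) =
     measure_pmf.prob ?M (CC n False) + measure_pmf.prob ?M (CC n True) - measure_pmf.prob ?M (CC n True \<inter> CC n False)"
    by (simp add: measure_pmf.finite_measure_Union' measure_pmf.finite_measure_Diff')
  also have "CC n True \<inter> CC n False = CC n False \<inter> CC n True" by blast
  finally have "measure_pmf.prob ?M (CC n False \<union> CC n True) = 2 * (p ^ 2 * cp n p) - (p ^ 2 * cp n p) ^ 2"
    using ind prob_CC[OF p] by (simp add: power2_eq_square)
  moreover have "measure_pmf.prob ?M (CC n False \<union> CC n True) \<le> cp (Suc n) p"
    unfolding cp_def using sub by (intro measure_pmf.finite_measure_mono) auto
  ultimately show ?thesis by simp
qed

lemma cp_0: "cp 0 p = 1"
  by (simp add: cp_def root_def conn_in_def node_def)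

lemma cp_le1: "cp n p \<le> 1"
  by (simp add: cp_def)

lemma fix_arith:
  fixes P :: real assumes P: "P > 0"
  shows "2 * (P * ((2 * P - 1) / P ^ 2)) - (P * ((2 * P - 1) / P ^ 2)) ^ 2 = (2 * P - 1) / P ^ 2"
proof -
  have e: "P * ((2 * P - 1) / P ^ 2) = (2 * P - 1) / P" using P by (simp add: power2_eq_square)
  have "2 * ((2 * P - 1) / P) - ((2 * P - 1) / P) ^ 2 = ((2 * P - 1) * (2 * P) - (2 * P - 1) ^ 2) / P ^ 2"
    using P by (simp add: power2_eq_square field_simps)
  also have "(2 * P - 1) * (2 * P) - (2 * P - 1) ^ 2 = 2 * P - 1" by (simp add: power2_eq_square algebra_simps)
  finally show ?thesis unfolding e .
qed

lemma cp_lower: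
  assumes p: "0 \<le> p" "p \<le> 1" and p2: "1 / 2 < p ^ 2"
  shows "(2 * p ^ 2 - 1) / (p ^ 2) ^ 2 \<le> cp n p"
proof -
  define P where "P = p ^ 2"
  have P0: "P > 0" using p2 unfolding P_def by linarith
  have P1: "P \<le> 1" using p unfolding P_def by (simp add: power_le_one)
  have P2: "1 / 2 < P" using p2 unfolding P_def .
  define d where "d = (2 * P - 1) / P ^ 2"
  have dpos: "0 \<le> d" using P0 P2 by (simp add: d_def)
  have d1: "d \<le> 1"
  proof -
    have "2 * P - 1 \<le> P ^ 2" using sum_squares_ge_zero[of "P - 1" 0] by (simp add: power2_eq_square algebra_simps)
    then show ?thesis using P0 by (simp add: d_def)
  qed
  have fixp: "2 * (P * d) - (P * d) ^ 2 = d" unfolding d_def by (rule fix_arith[OF P0])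
  have "d \<le> cp n p"
  proof (induction n)
    case 0 then show ?case using d1 by (simp add: cp_0)
  next
    case (Suc n)
    define g where "g = cp n p"
    have dg: "d \<le> g" "g \<le> 1" using Suc cp_le1 by (simp_all add: g_def)
    have "(P * g - P * d) * (2 - P * g - P * d) \<ge> 0"
    proof (rule mult_nonneg_nonneg)
      show "0 \<le> P * g - P * d" using dg P0 by (simp add: mult_left_mono)
      have "P * g \<le> 1" using dg P1 P0 dpos by (metis dual_order.trans less_imp_le mult_le_one)
      moreover have "P * d \<le> 1" using dg P1 P0 dpos by (metis dual_order.trans less_imp_le mult_le_one)
      ultimately show "0 \<le> 2 - P * g - P * d" by simp
    qed
    then have "d \<le> 2 * (P * g) - (P * g) ^ 2"
      using fixp by (simp add: algebra_simps power2_eq_square)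
    also have "\<dots> \<le> cp (Suc n) p" using cp_rec[OF p] by (simp add: g_def P_def)
    finally show ?case .
  qed
  then show ?thesis by (simp add: d_def P_def)
qed

theorem mainTheorem6:
  fixes p :: real
  assumes "1 / sqrt 2 < p" and "p < 1"
  shows "\<exists>c>0. \<forall>a>0. \<forall>n\<ge>1. \<forall>S. local_routing n (root n True) (root n False) S \<longrightarrow>
           measure_pmf.prob (TT n p)
              {\<omega>. conn_in n (open_edges \<omega>) (root n True) (root n False)
                   \<and> a / p ^ n \<le> real (num_queries S \<omega>)}
           / measure_pmf.prob (TT n p) {\<omega>. conn_in n (open_edges \<omega>) (root n True) (root n False)}
           \<ge> 1 - c * a"
proof -
  have s0: "0 < 1 / sqrt (2::real)" by simp
  have p0: "0 < p" using assms(1) s0 by linarith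
  have pp: "0 \<le> p" "p \<le> 1" using p0 assms(2) by simp_all
  have "(1 / sqrt (2::real)) ^ 2 < p ^ 2"
    using assms(1) s0 by (intro power_strict_mono) simp_all
  then have p2: "1 / 2 < p ^ 2" by (simp add: power_divide)
  define d where "d = (2 * p ^ 2 - 1) / (p ^ 2) ^ 2"
  have dpos: "0 < d" unfolding d_def using p2 p0 by simp
  show ?thesis
  proof (intro exI[of _ "1 / d"] conjI allI impI)
    show "0 < 1 / d" using dpos by simp
    fix a :: real and n :: nat and S
    assume a: "0 < a" and n: "1 \<le> n" and loc: "local_routing n (root n True) (root n False) S"
    define C where "C = {\<omega>. conn_in n (open_edges \<omega>) (root n True) (root n False)}"
    define B where "B = {\<omega>. conn_in n (open_edges \<omega>) (root n True) (root n False)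
            \<and> real (num_queries S \<omega>) < a / p ^ n}"
    have eqE: "{\<omega>. conn_in n (open_edges \<omega>) (root n True) (root n False)
                   \<and> a / p ^ n \<le> real (num_queries S \<omega>)} = C - B"
      unfolding C_def B_def by auto
    have BC: "B \<subseteq> C" unfolding B_def C_def by auto
    have PB: "measure_pmf.prob (TT n p) B \<le> a"
    proof -
      have "measure_pmf.prob (TT n p) B \<le> a / p ^ n * p ^ n"
        unfolding B_def using a p0 by (intro bad_bound[OF n loc pp]) simp
      also have "\<dots> = a" using p0 by simp
      finally show ?thesis .
    qed
    have PC: "d \<le> measure_pmf.prob (TT n p) C"
      using cp_lower[OF pp p2, of n] unfolding C_def cp_def d_def .
    have PC0: "0 < measure_pmf.prob (TT n p) C" using PC dpos by linarith
    have diff: "measure_pmf.prob (TT n p) (C - B) = measure_pmf.prob (TT n p) C - measure_pmf.prob (TT n p) B"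
      using BC by (intro measure_pmf.finite_measure_Diff) auto
    have "measure_pmf.prob (TT n p) B / measure_pmf.prob (TT n p) C \<le> a / d"
      using PB PC PC0 dpos a by (intro frac_le) simp_all
    then have "1 - (1 / d) * a \<le> 1 - measure_pmf.prob (TT n p) B / measure_pmf.prob (TT n p) C"
      by simp
    also have "\<dots> = measure_pmf.prob (TT n p) (C - B) / measure_pmf.prob (TT n p) C"
      using PC0 by (simp add: diff field_simps)
    finally show "1 - (1 / d) * a \<le> measure_pmf.prob (TT n p)
              {\<omega>. conn_in n (open_edges \<omega>) (root n True) (root n False)
                   \<and> a / p ^ n \<le> real (num_queries S \<omega>)}
           / measure_pmf.prob (TT n p) {\<omega>. conn_in n (open_edges \<omega>) (root n True) (root n False)}"
      unfolding eqE C_def[symmetric] .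
  qed
qed

end
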